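(* Let $n\ge1$ and let $\chi$ be a character of $S_n$. Then $d_\chi^{S_n}(AB)=d_\chi^{S_n}(BA)$ for all $A,B\in\mathbb S_n(\mathbb C)$.
   Context: A character of $S_n$ is a function $g\mapsto\operatorname{tr}(\rho(g))$ for some homomorphism $\rho:S_n\to GL_m(\mathbb C)$, $m\ge1$. $\mathbb S_n(\mathbb C)$ is the set of complex symmetric $n\times n$ matrices. $d_\chi^{S_n}(A)=\sum_{\sigma\in S_n}\chi(\sigma)\prod_{i=1}^n A_{i\,\sigma(i)}$. *)

theory Defs
  imports "Jordan_Normal_Form.Matrix" "HOL-Combinatorics.Permutations" Complex_Main
begin

text \<open>Permutations of S_n are represented as bijections of {0..<n} (identity outside).
  The trace of a square matrix.\<close>
definition mat_trace :: "complex mat \<Rightarrow> complex" where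
  "mat_trace M = (\<Sum>i<dim_row M. M $$ (i, i))"

definition is_character :: "nat \<Rightarrow> ((nat \<Rightarrow> nat) \<Rightarrow> complex) \<Rightarrow> bool" where
  "is_character n \<chi> \<longleftrightarrow>
     (\<exists>m::nat. m \<ge> 1 \<and> (\<exists>\<rho> :: (nat \<Rightarrow> nat) \<Rightarrow> complex mat.
        (\<forall>\<sigma>. \<sigma> permutes {..<n} \<longrightarrow> \<rho> \<sigma> \<in> carrier_mat m m \<and> invertible_mat (\<rho> \<sigma>)) \<and>
        (\<forall>\<sigma> \<tau>. \<sigma> permutes {..<n} \<longrightarrow> \<tau> permutes {..<n} \<longrightarrow> \<rho> (\<sigma> \<circ> \<tau>) = \<rho> \<sigma> * \<rho> \<tau>) \<and>
        (\<forall>\<sigma>. \<sigma> permutes {..<n} \<longrightarrow> \<chi> \<sigma> = mat_trace (\<rho> \<sigma>))))"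

definition immanant :: "nat \<Rightarrow> ((nat \<Rightarrow> nat) \<Rightarrow> complex) \<Rightarrow> complex mat \<Rightarrow> complex" where
  "immanant n \<chi> A = (\<Sum>\<sigma> | \<sigma> permutes {..<n}. \<chi> \<sigma> * (\<Prod>i<n. A $$ (i, \<sigma> i)))"

end

theory Submission
  imports Defs "HOL-Combinatorics.Cycles"
begin


lemma cycle_snoc2: "cycle_of_list (xs @ [a, b]) = cycle_of_list (xs @ [a]) \<circ> transpose a b"
proof (induction xs)
  case Nil then show ?case by simp
next
  case (Cons x ys)
  show ?case
  proof (cases ys)
    case Nil then show ?thesis by simp
  next
    case (Cons y zs)
    then show ?thesis using Cons.IH by (simp add: comp_assoc)
  qed
qed

lemma cycle_rev_inv: "cycle_of_list (rev cs) \<circ> cycle_of_list cs = id"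
proof (induction cs rule: cycle_of_list.induct)
  case (1 i j cs)
  have "cycle_of_list (rev (i # j # cs)) = cycle_of_list (rev (j # cs)) \<circ> transpose j i"
    using cycle_snoc2[of "rev cs" j i] by simp
  hence "cycle_of_list (rev (i # j # cs)) \<circ> cycle_of_list (i # j # cs)
     = cycle_of_list (rev (j # cs)) \<circ> (transpose j i \<circ> transpose i j) \<circ> cycle_of_list (j # cs)"
    by (simp add: comp_assoc)
  also have "transpose j i \<circ> transpose i j = id"
    by (simp add: transpose_commute)
  finally show ?case using 1 by simp
qed simp_all

definition revperm :: "'a list \<Rightarrow> 'a \<Rightarrow> 'a" where
  "revperm cs x = (if x \<in> set cs then rev cs ! (THE i. i < length cs \<and> cs ! i = x) else x)"

lemma revperm_nth:
  assumes "distinct cs" "i < length cs"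
  shows "revperm cs (cs ! i) = cs ! (length cs - 1 - i)"
proof -
  have "(THE k. k < length cs \<and> cs ! k = cs ! i) = i"
    using assms by (auto simp: nth_eq_iff_index_eq)
  thus ?thesis using assms by (simp add: revperm_def rev_nth)
qed

lemma revperm_map: "distinct cs \<Longrightarrow> map (revperm cs) cs = rev cs"
  by (rule nth_equalityI) (auto simp: revperm_nth rev_nth)

lemma revperm_invol: "distinct cs \<Longrightarrow> revperm cs (revperm cs x) = x"
proof (cases "x \<in> set cs")
  case True
  assume d: "distinct cs"
  then obtain i where i: "i < length cs" "x = cs ! i" using True by (auto simp: in_set_conv_nth)
  have "length cs - 1 - i < length cs" using i by simp
  then show ?thesis using i d by (simp add: revperm_nth)
next
  case False then show ?thesis by (simp add: revperm_def)
qed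

lemma revperm_out: "x \<notin> set cs \<Longrightarrow> revperm cs x = x"
  by (simp add: revperm_def)




lemma cycle_invol:
  assumes "distinct cs"
  shows "\<forall>x. cycle_of_list cs (revperm cs (cycle_of_list cs (revperm cs x))) = x"
proof -
  let ?t = "revperm cs" and ?c = "cycle_of_list cs"
  have tt: "?t \<circ> ?t = id" using revperm_invol[OF assms] by (auto simp: fun_eq_iff)
  have bt: "bij ?t" using o_bij[OF tt tt] .
  have it: "inv_into UNIV ?t = ?t" using inv_unique_comp[OF tt tt] .
  have "?t \<circ> ?c \<circ> ?t = cycle_of_list (rev cs)"
    using conjugation_of_cycle[OF assms bt] by (simp add: it revperm_map[OF assms])
  moreover have "?c \<circ> cycle_of_list (rev cs) = id"
    using cycle_rev_inv[of "rev cs"] by simp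
  ultimately have "?c \<circ> (?t \<circ> ?c \<circ> ?t) = id" by simp
  thus ?thesis by (auto simp: fun_eq_iff)
qed

lemma cycle_decomp_permutes: "cycle_decomp I p \<Longrightarrow> p permutes I"
proof (induction rule: cycle_decomp.induct)
  case empty
  show ?case by (rule permutes_id)
next
  case (comp I p cs)
  have 1: "cycle_of_list cs permutes (set cs \<union> I)"
    by (rule permutes_subset[OF cycle_permutes]) simp
  have 2: "p permutes (set cs \<union> I)"
    by (rule permutes_subset[OF comp.IH]) simp
  show ?case by (rule permutes_compose[OF 2 1])
qed

lemma cycle_decomp_invol:
  "cycle_decomp I p \<Longrightarrow> \<exists>\<tau>. (\<forall>x. x \<notin> I \<longrightarrow> \<tau> x = x) \<and> (\<forall>x. \<tau> (\<tau> x) = x) \<and> (\<forall>x. p (\<tau> (p (\<tau> x))) = x)"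
proof (induction rule: cycle_decomp.induct)
  case empty then show ?case by (rule exI[of _ id]) simp
next
  case (comp I p cs)
  then obtain \<tau> where t1: "\<forall>x. x \<notin> I \<longrightarrow> \<tau> x = x" and t2: "\<forall>x. \<tau> (\<tau> x) = x"
    and t3: "\<forall>x. p (\<tau> (p (\<tau> x))) = x" by blast
  have pI: "p permutes I" using cycle_decomp_permutes[OF comp(1)] .
  let ?t = "revperm cs" and ?c = "cycle_of_list cs"
  have c3: "\<forall>x. ?c (?t (?c (?t x))) = x" using cycle_invol[OF comp(2)] .
  have c2: "\<forall>x. ?t (?t x) = x" using revperm_invol[OF comp(2)] by blast
  have c1: "\<forall>x. x \<notin> set cs \<longrightarrow> ?t x = x" using revperm_out by metis
  have tin: "\<tau> x \<in> I" if "x \<in> I" for x using t1 t2 that by metis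
  have ctin: "?t x \<in> set cs" if "x \<in> set cs" for x using c1 c2 that by metis
  have pin: "p x \<in> I" if "x \<in> I" for x using pI that by (simp add: permutes_in_image)
  have pout: "p x = x" if "x \<notin> I" for x using pI that by (simp add: permutes_not_in)
  have cin: "?c x \<in> set cs" if "x \<in> set cs" for x using permutes_in_image[OF cycle_permutes, of cs x] that by simp
  have cout: "?c x = x" if "x \<notin> set cs" for x using that by (simp add: id_outside_supp)
  define \<tau>' where "\<tau>' x = (if x \<in> set cs then ?t x else \<tau> x)" for x
  show ?case
  proof (intro exI[of _ \<tau>'] conjI allI impI)
    fix x assume "x \<notin> set cs \<union> I" then show "\<tau>' x = x" using t1 by (simp add: \<tau>'_def)
  next
    fix x show "\<tau>' (\<tau>' x) = x"
    proof (cases "x \<in> set cs")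
      case True
      then have "\<tau>' x = ?t x" "?t x \<in> set cs" using ctin by (auto simp: \<tau>'_def)
      then show ?thesis using c2 True by (simp add: \<tau>'_def)
    next
      case False
      then have a: "\<tau>' x = \<tau> x" by (simp add: \<tau>'_def)
      have "\<tau> x \<notin> set cs"
      proof (cases "x \<in> I")
        case True then show ?thesis using tin[OF True] comp(3) by blast
      next
        case False then show ?thesis using t1 \<open>x \<notin> set cs\<close> by simp
      qed
      then show ?thesis using a t2 by (simp add: \<tau>'_def)
    qed
  next
    fix x
    consider "x \<in> set cs" | "x \<in> I" | "x \<notin> set cs" "x \<notin> I" by blast
    then show "(?c \<circ> p) (\<tau>' ((?c \<circ> p) (\<tau>' x))) = x"
    proof cases
      case 1
      have a: "\<tau>' x = ?t x" using 1 by (simp add: \<tau>'_def)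
      have b: "?t x \<notin> I" using ctin[OF 1] comp(3) by blast
      have d: "?c (?t x) \<in> set cs" using cin ctin 1 by blast
      have e: "?t (?c (?t x)) \<notin> I" using ctin[OF d] comp(3) by blast
      have "(?c \<circ> p) (\<tau>' x) = ?c (?t x)" using a pout[OF b] by simp
      moreover have "\<tau>' (?c (?t x)) = ?t (?c (?t x))" using d by (simp add: \<tau>'_def)
      moreover have "(?c \<circ> p) (?t (?c (?t x))) = ?c (?t (?c (?t x)))" using pout[OF e] by simp
      ultimately show ?thesis using c3 by simp
    next
      case 2
      have x: "x \<notin> set cs" using 2 comp(3) by blast
      have a: "\<tau>' x = \<tau> x" using x by (simp add: \<tau>'_def)
      have b: "p (\<tau> x) \<in> I" using pin tin 2 by blast
      have b': "p (\<tau> x) \<notin> set cs" using b comp(3) by blast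
      have d: "\<tau> (p (\<tau> x)) \<in> I" using tin b by blast
      have d': "p (\<tau> (p (\<tau> x))) \<notin> set cs" using pin[OF d] comp(3) by blast
      have "(?c \<circ> p) (\<tau>' x) = p (\<tau> x)" using a cout[OF b'] by simp
      moreover have "\<tau>' (p (\<tau> x)) = \<tau> (p (\<tau> x))" using b' by (simp add: \<tau>'_def)
      moreover have "(?c \<circ> p) (\<tau> (p (\<tau> x))) = p (\<tau> (p (\<tau> x)))" using cout[OF d'] by simp
      ultimately show ?thesis using t3 by simp
    next
      case 3
      then have "\<tau>' x = x" using t1 by (simp add: \<tau>'_def)
      then show ?thesis using 3 pout cout by simp
    qed
  qed
qed

lemma perm_invol_conj:
  assumes "\<sigma> permutes S" "finite S"
  shows "\<exists>\<tau>. \<tau> permutes S \<and> \<tau> \<circ> \<tau> = id \<and> inv_into UNIV \<sigma> = \<tau> \<circ> \<sigma> \<circ> \<tau>"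
proof -
  obtain \<tau> where t1: "\<forall>x. x \<notin> S \<longrightarrow> \<tau> x = x" and t2: "\<forall>x. \<tau> (\<tau> x) = x"
    and t3: "\<forall>x. \<sigma> (\<tau> (\<sigma> (\<tau> x))) = x"
    using cycle_decomp_invol[OF cycle_decomposition[OF assms]] by blast
  have tt: "\<tau> \<circ> \<tau> = id" using t2 by (auto simp: fun_eq_iff)
  have "\<tau> permutes S" unfolding permutes_def using t1 t2 by metis
  moreover have "inv_into UNIV \<sigma> = \<tau> \<circ> \<sigma> \<circ> \<tau>"
  proof (rule inv_unique_comp)
    show "\<tau> \<circ> \<sigma> \<circ> \<tau> \<circ> \<sigma> = id" using t2 t3 by (auto simp: fun_eq_iff) (metis)
    show "\<sigma> \<circ> (\<tau> \<circ> \<sigma> \<circ> \<tau>) = id" using t3 by (auto simp: fun_eq_iff)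
  qed
  ultimately show ?thesis using tt by blast
qed

lemma mat_trace_comm:
  assumes "X \<in> carrier_mat m m" "Y \<in> carrier_mat m m"
  shows "mat_trace (X * Y) = mat_trace (Y * X)"
proof -
  have "mat_trace (X * Y) = (\<Sum>i<m. \<Sum>k<m. X $$ (i,k) * Y $$ (k,i))"
    using assms by (simp add: mat_trace_def scalar_prod_def atLeast0LessThan)
  also have "\<dots> = (\<Sum>k<m. \<Sum>i<m. Y $$ (k,i) * X $$ (i,k))"
    by (subst sum.swap) (simp add: mult.commute)
  also have "\<dots> = mat_trace (Y * X)"
    using assms by (simp add: mat_trace_def scalar_prod_def atLeast0LessThan)
  finally show ?thesis .
qed

lemma character_inv:
  assumes "is_character n \<chi>" "\<sigma> permutes {..<n}"
  shows "\<chi> (inv_into UNIV \<sigma>) = \<chi> \<sigma>"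
proof -
  obtain m \<rho> where r1: "\<forall>\<sigma>. \<sigma> permutes {..<n} \<longrightarrow> \<rho> \<sigma> \<in> carrier_mat m m"
    and r2: "\<forall>\<sigma> \<tau>. \<sigma> permutes {..<n} \<longrightarrow> \<tau> permutes {..<n} \<longrightarrow> \<rho> (\<sigma> \<circ> \<tau>) = \<rho> \<sigma> * \<rho> \<tau>"
    and r3: "\<forall>\<sigma>. \<sigma> permutes {..<n} \<longrightarrow> \<chi> \<sigma> = mat_trace (\<rho> \<sigma>)"
    using assms(1) unfolding is_character_def by blast
  obtain \<tau> where t: "\<tau> permutes {..<n}" "\<tau> \<circ> \<tau> = id" "inv_into UNIV \<sigma> = \<tau> \<circ> \<sigma> \<circ> \<tau>"
    using perm_invol_conj[OF assms(2)] by blast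
  have st: "\<sigma> \<circ> \<tau> permutes {..<n}" using t(1) assms(2) by (rule permutes_compose)
  have idp: "id permutes {..<n}" by (simp add: permutes_id)
  have inv_p: "inv_into UNIV \<sigma> permutes {..<n}" using permutes_inv[OF assms(2)] .
  have "\<chi> (inv_into UNIV \<sigma>) = mat_trace (\<rho> (\<tau> \<circ> (\<sigma> \<circ> \<tau>)))" using r3 inv_p t(3) by (simp add: comp_assoc)
  also have "\<dots> = mat_trace (\<rho> \<tau> * (\<rho> \<sigma> * \<rho> \<tau>))" using r2 t(1) st assms(2) by simp
  also have "\<dots> = mat_trace ((\<rho> \<sigma> * \<rho> \<tau>) * \<rho> \<tau>)"
    using r1 t(1) assms(2) by (intro mat_trace_comm[of _ m]) (auto intro: mult_carrier_mat)
  also have "(\<rho> \<sigma> * \<rho> \<tau>) * \<rho> \<tau> = \<rho> \<sigma> * (\<rho> \<tau> * \<rho> \<tau>)"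
    using r1 t(1) assms(2) by (intro assoc_mult_mat) auto
  also have "\<rho> \<tau> * \<rho> \<tau> = \<rho> id" using r2 t by metis
  also have "\<rho> \<sigma> * \<rho> id = \<rho> \<sigma>" using r2 assms(2) idp by (metis comp_id)
  finally show ?thesis using r3 assms(2) by simp
qed

theorem mainTheorem12:
  fixes n :: nat and \<chi> :: "(nat \<Rightarrow> nat) \<Rightarrow> complex" and A B :: "complex mat"
  assumes "n \<ge> 1"
    and "is_character n \<chi>"
    and "A \<in> carrier_mat n n" and "transpose_mat A = A"
    and "B \<in> carrier_mat n n" and "transpose_mat B = B"
  shows "immanant n \<chi> (A * B) = immanant n \<chi> (B * A)"
proof -
  define M where "M = A * B"
  have Mc: "M \<in> carrier_mat n n" using assms(3,5) by (simp add: M_def)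
  have BA: "B * A = transpose_mat M"
    using transpose_mult[OF assms(3,5)] assms(4,6) by (simp add: M_def)
  have prod_eq: "(\<Prod>i<n. transpose_mat M $$ (i, \<sigma> i)) = (\<Prod>i<n. M $$ (i, inv_into UNIV \<sigma> i))"
    if s: "\<sigma> permutes {..<n}" for \<sigma>
  proof -
    have "(\<Prod>i<n. transpose_mat M $$ (i, \<sigma> i)) = (\<Prod>i<n. M $$ (\<sigma> i, i))"
      using Mc permutes_in_image[OF s] by (intro prod.cong) auto
    also have "\<dots> = (\<Prod>i<n. M $$ (\<sigma> i, inv_into UNIV \<sigma> (\<sigma> i)))"
      using permutes_inverses(2)[OF s] by simp
    also have "\<dots> = (\<Prod>i<n. M $$ (i, inv_into UNIV \<sigma> i))"
      using prod.reindex_bij_betw[OF permutes_imp_bij[OF s], of "\<lambda>j. M $$ (j, inv_into UNIV \<sigma> j)"]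
      by simp
    finally show ?thesis .
  qed
  have "immanant n \<chi> (B * A) = (\<Sum>\<sigma> | \<sigma> permutes {..<n}. \<chi> \<sigma> * (\<Prod>i<n. M $$ (i, inv_into UNIV \<sigma> i)))"
    unfolding immanant_def BA using prod_eq by (intro sum.cong) auto
  also have "\<dots> = (\<Sum>\<sigma> | \<sigma> permutes {..<n}. \<chi> (inv_into UNIV \<sigma>) * (\<Prod>i<n. M $$ (i, inv_into UNIV (inv_into UNIV \<sigma>) i)))"
    by (rule sum_permutations_inverse)
  also have "\<dots> = (\<Sum>\<sigma> | \<sigma> permutes {..<n}. \<chi> \<sigma> * (\<Prod>i<n. M $$ (i, \<sigma> i)))"
    using character_inv[OF assms(2)] by (intro sum.cong) (auto simp: inv_inv_eq permutes_bij)
  also have "\<dots> = immanant n \<chi> (A * B)" by (simp add: immanant_def M_def)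
  finally show ?thesis by simp
qed

end
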